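(* Let $p(x,y)$ and $q(x,y)$ be real homogeneous polynomials in two variables of the same degree $j>1$, not both identically zero. If $$\frac{\partial p}{\partial x}+\frac{\partial q}{\partial y}=0 \qquad\text{and}\qquad \frac{\partial p}{\partial x}\frac{\partial q}{\partial y}-\frac{\partial p}{\partial y}\frac{\partial q}{\partial x}=0$$ identically on $\mathbb{R}^2$, then there exist $\alpha,\beta,\zeta\in\mathbb{R}$ with $\alpha^2+\beta^2\neq 0$ and $\zeta\neq 0$ such that $$p(x,y)=\zeta\alpha(\beta x-\alpha y)^j,\qquad q(x,y)=\zeta\beta(\beta x-\alpha y)^j.$$ *)

theory Defs
  imports "HOL-Analysis.Analysis"
begin

definition hom_poly2 :: "nat \<Rightarrow> (real \<Rightarrow> real \<Rightarrow> real) \<Rightarrow> bool" where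
  "hom_poly2 j p \<longleftrightarrow> (\<exists>a::nat \<Rightarrow> real. \<forall>x y. p x y = (\<Sum>k\<le>j. a k * x ^ k * y ^ (j - k)))"

end

theory Submission imports Defs "HOL-Computational_Algebra.Polynomial_Factorial" "HOL-Computational_Algebra.Field_as_Ring" "HOL-Computational_Algebra.Polynomial" begin

definition hp :: "nat \<Rightarrow> (nat \<Rightarrow> real) \<Rightarrow> real \<Rightarrow> real \<Rightarrow> real" where
  "hp j a x y = (\<Sum>k\<le>j. a k * x ^ k * y ^ (j - k))"
definition hdx :: "nat \<Rightarrow> (nat \<Rightarrow> real) \<Rightarrow> real \<Rightarrow> real \<Rightarrow> real" where
  "hdx j a x y = (\<Sum>k\<le>j. a k * (real k * x ^ (k - 1)) * y ^ (j - k))"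
definition hdy :: "nat \<Rightarrow> (nat \<Rightarrow> real) \<Rightarrow> real \<Rightarrow> real \<Rightarrow> real" where
  "hdy j a x y = (\<Sum>k\<le>j. a k * x ^ k * (real (j - k) * y ^ (j - k - 1)))"

lemma hp_dx: "((\<lambda>s. hp j a s y) has_real_derivative hdx j a x y) (at x)"
  unfolding hp_def hdx_def
  by (rule DERIV_sum) (auto intro!: derivative_eq_intros)

lemma hp_dy: "((\<lambda>t. hp j a x t) has_real_derivative hdy j a x y) (at y)"
  unfolding hp_def hdy_def
  by (rule DERIV_sum) (auto intro!: derivative_eq_intros)

lemma hp_dir: "((\<lambda>t. hp j a (x + t * u) (y + t * v)) has_real_derivative
     u * hdx j a (x + t * u) (y + t * v) + v * hdy j a (x + t * u) (y + t * v)) (at t)"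
  unfolding hp_def hdx_def hdy_def sum_distrib_left sum.distrib[symmetric]
  by (rule DERIV_sum) (auto intro!: derivative_eq_intros simp: algebra_simps)

lemma euler: "x * hdx j a x y + y * hdy j a x y = real j * hp j a x y"
  unfolding hp_def hdx_def hdy_def sum_distrib_left sum.distrib[symmetric]
proof (rule sum.cong)
  fix k assume k: "k \<in> {..j}"
  have 1: "x * (real k * x ^ (k - 1)) = real k * x ^ k"
    by (cases k) auto
  have 2: "y * (real (j - k) * y ^ (j - k - 1)) = real (j - k) * y ^ (j - k)"
    by (cases "j - k") auto
  have 3: "real k + real (j - k) = real j" using k by auto
  have "x * (a k * (real k * x ^ (k - 1)) * y ^ (j - k)) + y * (a k * x ^ k * (real (j - k) * y ^ (j - k - 1)))
     = a k * y ^ (j - k) * (x * (real k * x ^ (k - 1))) + a k * x ^ k * (y * (real (j - k) * y ^ (j - k - 1)))"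
    by (simp add: algebra_simps)
  also have "\<dots> = a k * x ^ k * y ^ (j - k) * (real k + real (j - k))"
    unfolding 1 2 by (simp add: algebra_simps)
  finally show "x * (a k * (real k * x ^ (k - 1)) * y ^ (j - k)) + y * (a k * x ^ k * (real (j - k) * y ^ (j - k - 1)))
     = real j * (a k * x ^ k * y ^ (j - k))" unfolding 3 by simp
qed simp

lemma hp_hom: "hp j a (c*x) (c*y) = c ^ j * hp j a x y"
  unfolding hp_def sum_distrib_left
proof (rule sum.cong)
  fix k assume "k \<in> {..j}"
  then have "c ^ j = c ^ k * c ^ (j - k)" by (simp add: power_add[symmetric])
  then show "a k * (c * x) ^ k * (c * y) ^ (j - k) = c ^ j * (a k * x ^ k * y ^ (j - k))"
    by (simp add: power_mult_distrib)
qed simp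

lemma prop_sum:
  assumes "\<forall>k\<le>j. \<beta> * a k = \<alpha> * b k"
  shows "\<beta> * hp j a x y = \<alpha> * hp j b x y" "\<beta> * hdx j a x y = \<alpha> * hdx j b x y"
        "\<beta> * hdy j a x y = \<alpha> * hdy j b x y"
proof -
  have e: "\<And>k c. k \<le> j \<Longrightarrow> \<beta> * (a k * c) = \<alpha> * (b k * c)" using assms
    by (metis mult.assoc)
  show "\<beta> * hp j a x y = \<alpha> * hp j b x y" unfolding hp_def sum_distrib_left
    by (rule sum.cong) (auto simp: mult.assoc e)
  show "\<beta> * hdx j a x y = \<alpha> * hdx j b x y" unfolding hdx_def sum_distrib_left
    by (rule sum.cong) (auto simp: mult.assoc e)
  show "\<beta> * hdy j a x y = \<alpha> * hdy j b x y" unfolding hdy_def sum_distrib_left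
    by (rule sum.cong) (auto simp: mult.assoc e)
qed

lemma poly_prop:
  fixes P Q :: "real poly"
  assumes "pderiv P * Q = pderiv Q * P"
  shows "\<exists>\<alpha> \<beta>. (\<alpha> \<noteq> 0 \<or> \<beta> \<noteq> 0) \<and> smult \<beta> P = smult \<alpha> Q"
proof (cases "P = 0 \<or> Q = 0")
  case True
  then show ?thesis
  proof
    assume "P = 0" then show ?thesis by (intro exI[of _ 0] exI[of _ 1]) simp
  next
    assume "Q = 0" then show ?thesis by (intro exI[of _ 1] exI[of _ 0]) simp
  qed
next
  case False
  define G where "G = gcd P Q"
  have G0: "G \<noteq> 0" using False G_def by simp
  obtain P1 Q1 where PQ: "P = P1 * G" "Q = Q1 * G" and cop: "coprime P1 Q1"
    using gcd_coprime_exists[OF G0[unfolded G_def]] G_def by blast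
  have "G * G * (pderiv P1 * Q1 - pderiv Q1 * P1) = 0"
    using assms unfolding PQ pderiv_mult by (simp add: algebra_simps)
  with G0 have eq: "pderiv P1 * Q1 = pderiv Q1 * P1" by simp
  have const: "pderiv X = 0" if eqX: "pderiv X * Y = pderiv Y * X" and copX: "coprime X Y" for X Y :: "real poly"
  proof (rule ccontr)
    assume nz: "pderiv X \<noteq> 0"
    have "X dvd pderiv X * Y" using eqX by simp
    then have "X dvd pderiv X" using copX by (simp add: coprime_dvd_mult_left_iff)
    then have "degree X \<le> degree (pderiv X)" using nz by (rule dvd_imp_degree_le)
    moreover have "degree X \<noteq> 0" using nz pderiv_eq_0_iff by blast
    ultimately show False by (simp add: degree_pderiv)
  qed
  have "pderiv P1 = 0" using const[OF eq cop] .
  moreover have "pderiv Q1 = 0" using const[OF eq[symmetric]] cop coprime_commute by blast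
  ultimately have "degree P1 = 0" "degree Q1 = 0" by (simp_all add: pderiv_eq_0_iff)
  then obtain c1 c2 where "P1 = [:c1:]" "Q1 = [:c2:]" by (metis degree_eq_zeroE)
  then have PP: "P = smult c1 G" "Q = smult c2 G" using PQ by auto
  have "c1 \<noteq> 0" using False PP by auto
  then show ?thesis using PP by (intro exI[of _ c1] exI[of _ c2]) (auto simp: mult.commute)
qed

theorem lemma1:
  fixes p q :: "real \<Rightarrow> real \<Rightarrow> real" and j :: nat
  assumes "j > 1"
    and "hom_poly2 j p" and "hom_poly2 j q"
    and "\<exists>x y. p x y \<noteq> 0 \<or> q x y \<noteq> 0"
    and "\<forall>x y. deriv (\<lambda>s. p s y) x + deriv (\<lambda>t. q x t) y = 0"
    and "\<forall>x y. deriv (\<lambda>s. p s y) x * deriv (\<lambda>t. q x t) y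
               - deriv (\<lambda>t. p x t) y * deriv (\<lambda>s. q s y) x = 0"
  shows "\<exists>\<alpha> \<beta> \<zeta> :: real. \<alpha>\<^sup>2 + \<beta>\<^sup>2 \<noteq> 0 \<and> \<zeta> \<noteq> 0 \<and>
           (\<forall>x y. p x y = \<zeta> * \<alpha> * (\<beta> * x - \<alpha> * y) ^ j \<and>
                  q x y = \<zeta> * \<beta> * (\<beta> * x - \<alpha> * y) ^ j)"
proof -
  obtain a where pa: "\<forall>x y. p x y = hp j a x y"
    using assms(2) unfolding hom_poly2_def hp_def by blast
  obtain b where qb: "\<forall>x y. q x y = hp j b x y"
    using assms(3) unfolding hom_poly2_def hp_def by blast
  have pE: "p = hp j a" using pa by (intro ext) simp
  have qE: "q = hp j b" using qb by (intro ext) simp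
  have dpx: "\<And>x y. deriv (\<lambda>s. p s y) x = hdx j a x y"
    unfolding pE by (rule DERIV_imp_deriv[OF hp_dx])
  have dpy: "\<And>x y. deriv (\<lambda>t. p x t) y = hdy j a x y"
    unfolding pE by (rule DERIV_imp_deriv[OF hp_dy])
  have dqx: "\<And>x y. deriv (\<lambda>s. q s y) x = hdx j b x y"
    unfolding qE by (rule DERIV_imp_deriv[OF hp_dx])
  have dqy: "\<And>x y. deriv (\<lambda>t. q x t) y = hdy j b x y"
    unfolding qE by (rule DERIV_imp_deriv[OF hp_dy])
  have div: "\<And>x y. hdx j a x y + hdy j b x y = 0" using assms(5) dpx dqy by simp
  have det: "\<And>x y. hdx j a x y * hdy j b x y - hdy j a x y * hdx j b x y = 0"
    using assms(6) dpx dpy dqx dqy by simp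
  have P1: "\<And>x y. hdx j a x y * hp j b x y = hdx j b x y * hp j a x y"
  proof -
    fix x y
    define A where "A = hdx j a x y"
    define B where "B = hdy j a x y"
    define C where "C = hdx j b x y"
    define D where "D = hdy j b x y"
    have E1: "x*A + y*B = real j * hp j a x y" unfolding A_def B_def by (rule euler)
    have E2: "x*C + y*D = real j * hp j b x y" unfolding C_def D_def by (rule euler)
    have dt: "A*D - B*C = 0" unfolding A_def B_def C_def D_def using det by simp
    have "real j * (C * hp j a x y - A * hp j b x y) = C*(x*A + y*B) - A*(x*C + y*D)"
      using E1 E2 by (simp add: algebra_simps)
    also have "\<dots> = - y * (A*D - B*C)" by (simp add: algebra_simps)
    also have "\<dots> = 0" using dt by simp
    finally have "C * hp j a x y - A * hp j b x y = 0" using assms(1) by simp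
    then show "hdx j a x y * hp j b x y = hdx j b x y * hp j a x y"
      unfolding A_def C_def by simp
  qed
  define P where "P = (\<Sum>k\<le>j. monom (a k) k)"
  define Q where "Q = (\<Sum>k\<le>j. monom (b k) k)"
  have fP: "(\<lambda>s. hp j a s 1) = poly P" unfolding P_def hp_def
    by (intro ext) (simp add: poly_sum poly_monom)
  have fQ: "(\<lambda>s. hp j b s 1) = poly Q" unfolding Q_def hp_def
    by (intro ext) (simp add: poly_sum poly_monom)
  have dP: "\<And>t. poly (pderiv P) t = hdx j a t 1"
  proof -
    fix t
    have "((\<lambda>s. hp j a s 1) has_real_derivative poly (pderiv P) t) (at t)"
      unfolding fP by (rule poly_DERIV)
    then show "poly (pderiv P) t = hdx j a t 1" using hp_dx DERIV_unique by blast
  qed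
  have dQ: "\<And>t. poly (pderiv Q) t = hdx j b t 1"
  proof -
    fix t
    have "((\<lambda>s. hp j b s 1) has_real_derivative poly (pderiv Q) t) (at t)"
      unfolding fQ by (rule poly_DERIV)
    then show "poly (pderiv Q) t = hdx j b t 1" using hp_dx DERIV_unique by blast
  qed
  have pP: "\<And>t. poly P t = hp j a t 1" using fP by metis
  have pQ: "\<And>t. poly Q t = hp j b t 1" using fQ by metis
  have "poly (pderiv P * Q) = poly (pderiv Q * P)"
    using P1 dP dQ pP pQ by (intro ext) simp
  then have "pderiv P * Q = pderiv Q * P" by (simp add: poly_eq_poly_eq_iff)
  then obtain \<alpha> \<beta> where ab: "\<alpha> \<noteq> 0 \<or> \<beta> \<noteq> 0" "smult \<beta> P = smult \<alpha> Q"
    using poly_prop by blast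
  have coef: "\<forall>k\<le>j. \<beta> * a k = \<alpha> * b k"
  proof (intro allI impI)
    fix k assume k: "k \<le> j"
    have cP: "coeff P k = a k" unfolding P_def using k by (simp add: coeff_sum coeff_monom)
    have cQ: "coeff Q k = b k" unfolding Q_def using k by (simp add: coeff_sum coeff_monom)
    show "\<beta> * a k = \<alpha> * b k"
      using arg_cong[OF ab(2), of "\<lambda>R. coeff R k"] cP cQ by simp
  qed
  note pr = prop_sum[OF coef]
  have X: "\<And>x y. \<alpha> * hdx j a x y + \<beta> * hdy j a x y = 0"
  proof -
    fix x y
    define A where "A = hdx j a x y"
    define B where "B = hdy j a x y"
    define C where "C = hdx j b x y"
    define D where "D = hdy j b x y"
    have f1: "\<beta> * A = \<alpha> * C" "\<beta> * B = \<alpha> * D" "A + D = 0"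
      unfolding A_def B_def C_def D_def using pr div by auto
    have "\<beta> * (\<alpha> * A + \<beta> * B) = 0" using f1 by algebra
    moreover have "\<alpha> * (\<alpha> * A + \<beta> * B) = 0" using f1 by algebra
    ultimately show "\<alpha> * hdx j a x y + \<beta> * hdy j a x y = 0"
      using ab(1) unfolding A_def B_def by auto
  qed
  have Y: "\<And>x y. \<alpha> * hdx j b x y + \<beta> * hdy j b x y = 0"
  proof -
    fix x y
    define A where "A = hdx j a x y"
    define B where "B = hdy j a x y"
    define C where "C = hdx j b x y"
    define D where "D = hdy j b x y"
    have f1: "\<beta> * A = \<alpha> * C" "\<beta> * B = \<alpha> * D" "A + D = 0"
      unfolding A_def B_def C_def D_def using pr div by auto
    have "\<beta> * (\<alpha> * C + \<beta> * D) = 0" using f1 by algebra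
    moreover have "\<alpha> * (\<alpha> * C + \<beta> * D) = 0" using f1 by algebra
    ultimately show "\<alpha> * hdx j b x y + \<beta> * hdy j b x y = 0"
      using ab(1) unfolding C_def D_def by auto
  qed
  have const: "hp j c (x + t * \<alpha>) (y + t * \<beta>) = hp j c x y"
    if Z: "\<And>x y. \<alpha> * hdx j c x y + \<beta> * hdy j c x y = 0" for c x y t
  proof -
    have "\<forall>s. ((\<lambda>t. hp j c (x + t * \<alpha>) (y + t * \<beta>)) has_real_derivative 0) (at s)"
    proof
      fix s
      show "((\<lambda>t. hp j c (x + t * \<alpha>) (y + t * \<beta>)) has_real_derivative 0) (at s)"
        using hp_dir[where u=\<alpha> and v=\<beta> and x=x and y=y and t=s and j=j and a=c]
          Z[of "x + s * \<alpha>" "y + s * \<beta>"] by simp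
    qed
    from DERIV_isconst_all[OF this, of t 0] show ?thesis by simp
  qed
  define N where "N = \<alpha>\<^sup>2 + \<beta>\<^sup>2"
  have N0: "N > 0" unfolding N_def using ab(1) by (auto simp: add_pos_nonneg add_nonneg_pos)
  define u where "u = hp j a \<beta> (-\<alpha>)"
  define v where "v = hp j b \<beta> (-\<alpha>)"
  have uv: "\<beta> * u = \<alpha> * v" unfolding u_def v_def by (rule pr(1))
  have rep: "p x y = ((\<beta> * x - \<alpha> * y) / N) ^ j * u \<and> q x y = ((\<beta> * x - \<alpha> * y) / N) ^ j * v"
    for x y
  proof -
    define c where "c = (\<beta> * x - \<alpha> * y) / N"
    define t0 where "t0 = (\<alpha> * x + \<beta> * y) / N"
    have cN: "c * N = \<beta> * x - \<alpha> * y" using N0 unfolding c_def by simp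
    have tN: "t0 * N = \<alpha> * x + \<beta> * y" using N0 unfolding t0_def by simp
    have "(c * \<beta> + t0 * \<alpha>) * N = (c * N) * \<beta> + (t0 * N) * \<alpha>" by (simp add: algebra_simps)
    also have "\<dots> = (\<beta> * x - \<alpha> * y) * \<beta> + (\<alpha> * x + \<beta> * y) * \<alpha>" unfolding cN tN ..
    also have "\<dots> = x * N" unfolding N_def by (simp add: power2_eq_square algebra_simps)
    finally have e1: "c * \<beta> + t0 * \<alpha> = x" using N0 by simp
    have "(c * (-\<alpha>) + t0 * \<beta>) * N = (c * N) * (-\<alpha>) + (t0 * N) * \<beta>" by (simp add: algebra_simps)
    also have "\<dots> = (\<beta> * x - \<alpha> * y) * (-\<alpha>) + (\<alpha> * x + \<beta> * y) * \<beta>" unfolding cN tN ..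
    also have "\<dots> = y * N" unfolding N_def by (simp add: power2_eq_square algebra_simps)
    finally have e2: "c * (-\<alpha>) + t0 * \<beta> = y" using N0 by simp
    have "p x y = hp j a (c * \<beta> + t0 * \<alpha>) (c * (-\<alpha>) + t0 * \<beta>)" using e1 e2 pE by simp
    also have "\<dots> = hp j a (c * \<beta>) (c * (-\<alpha>))" by (rule const[OF X])
    also have "\<dots> = c ^ j * u" unfolding u_def by (rule hp_hom)
    finally have 1: "p x y = c ^ j * u" .
    have "q x y = hp j b (c * \<beta> + t0 * \<alpha>) (c * (-\<alpha>) + t0 * \<beta>)" using e1 e2 qE by simp
    also have "\<dots> = hp j b (c * \<beta>) (c * (-\<alpha>))" by (rule const[OF Y])
    also have "\<dots> = c ^ j * v" unfolding v_def by (rule hp_hom)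
    finally have 2: "q x y = c ^ j * v" .
    show ?thesis using 1 2 unfolding c_def by simp
  qed
  define \<zeta> where "\<zeta> = (if \<alpha> \<noteq> 0 then u / \<alpha> else v / \<beta>) / N ^ j"
  have zu: "\<zeta> * \<alpha> * N ^ j = u \<and> \<zeta> * \<beta> * N ^ j = v"
  proof (cases "\<alpha> = 0")
    case True
    then have "\<beta> \<noteq> 0" using ab(1) by simp
    then show ?thesis using True uv N0 unfolding \<zeta>_def by simp
  next
    case False
    then show ?thesis using uv N0 unfolding \<zeta>_def by (simp add: field_simps)
  qed
  have z0: "\<zeta> \<noteq> 0"
  proof
    assume "\<zeta> = 0"
    then have "u = 0" "v = 0" using zu by auto
    then show False using rep assms(4) by auto
  qed
  have nz: "\<alpha>\<^sup>2 + \<beta>\<^sup>2 \<noteq> 0" using N0 unfolding N_def by linarith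
  have fin: "p x y = \<zeta> * \<alpha> * (\<beta> * x - \<alpha> * y) ^ j \<and> q x y = \<zeta> * \<beta> * (\<beta> * x - \<alpha> * y) ^ j" for x y
  proof
    have "p x y = (\<beta> * x - \<alpha> * y) ^ j * (\<zeta> * \<alpha> * N ^ j) / N ^ j"
      using rep[of x y] zu N0 by (simp add: power_divide)
    then show "p x y = \<zeta> * \<alpha> * (\<beta> * x - \<alpha> * y) ^ j" using N0 by simp
    have "q x y = (\<beta> * x - \<alpha> * y) ^ j * (\<zeta> * \<beta> * N ^ j) / N ^ j"
      using rep[of x y] zu N0 by (simp add: power_divide)
    then show "q x y = \<zeta> * \<beta> * (\<beta> * x - \<alpha> * y) ^ j" using N0 by simp
  qed
  show ?thesis using nz z0 fin by blast
qed


end
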